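(* The map $\phi : \mathbf{PM}_k \to \mathbf{PM}_k^\star$ linearly defined for any $k$-packed matrix $M$ by $\phi(\mathbf{F}_M) := \mathbf{F}^\star_{M^T}$ is a Hopf isomorphism.
   Context: Let $k \geq 1$, $A_k := \{0,1,\dots,k\}$. A $k$-packed matrix of size $n$ is an $n\times n$ matrix with entries in $A_k$ with at least one nonzero entry in each row and column. $\mathbf{PM}_k$ is the bigraded combinatorial Hopf algebra with fundamental basis $(\mathbf{F}_M)$ indexed by $k$-packed matrices, with product $\mathbf{F}_{M_1}\cdot\mathbf{F}_{M_2} = \sum_{M \in \mathrm{Sh}_c(M_1,M_2)} \mathbf{F}_M$ (for sizes $n_1,n_2$, $\mathrm{Sh}_c(M_1,M_2)$ is the set of all matrices obtained by shuffling the columns of $M_1$ with an $n_2 \times n_1$ zero block placed below it, with the columns of $M_2$ with an $n_1\times n_2$ zero block placed above it) and coproduct $\Delta(\mathbf{F}_M) = \sum_{M = [M_1|M_2]} \mathbf{F}_{\operatorname{cp}(M_1)} \otimes \mathbf{F}_{\operatorname{cp}(M_2)}$ (sum over splittings of $M$ into left and right column blocks whose compressions, obtained by deleting null rows and columns, are square). $\mathbf{PM}_k^\star$ is the bigraded dual Hopf algebra, with $(\mathbf{F}^\star_M)$ the adjoint basis of $(\mathbf{F}_M)$; its product shuffles rows ($\mathbf{F}^\star_{M_1}\cdot\mathbf{F}^\star_{M_2} = \sum \mathbf{F}^\star_M$ over all $M$ obtained by shuffling the rows of $[M_1 \mid 0_{n_1\times n_2}]$ with the rows of $[0_{n_2 \times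 n_1} \mid M_2]$) and its coproduct splits into top and bottom row blocks with square compressions. $M^T$ is the transpose of $M$. *)

theory Defs
  imports Main
begin

section \<open>Matrices with natural-number entries, stored as lists of rows\<close>

type_synonym mat = "nat list list"

definition is_mat :: "nat \<Rightarrow> nat \<Rightarrow> mat \<Rightarrow> bool" where
  "is_mat h w M \<longleftrightarrow> length M = h \<and> (\<forall>r\<in>set M. length r = w)"

text \<open>k-packed matrix: square n x n, entries in {0..k}, a nonzero entry in each row and column.
  The empty matrix (n = 0) is the unique packed matrix of size 0.\<close>
definition packed :: "nat \<Rightarrow> mat \<Rightarrow> bool" where
  "packed k M \<longleftrightarrow> (let n = length M in
     is_mat n n M \<and> (\<forall>r\<in>set M. \<forall>x\<in>set r. x \<le> k) \<and>
     (\<forall>i<n. \<exists>j<n. M ! i ! j \<noteq> 0) \<and> (\<forall>j<n. \<exists>i<n. M ! i ! j \<noteq> 0))"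

definition cols :: "nat \<Rightarrow> mat \<Rightarrow> nat list list" where
  "cols w M = map (\<lambda>j. map (\<lambda>r. r ! j) M) [0..<w]"

definition mat_of_cols :: "nat \<Rightarrow> nat list list \<Rightarrow> mat" where
  "mat_of_cols h cs = map (\<lambda>i. map (\<lambda>c. c ! i) cs) [0..<h]"

definition mT :: "mat \<Rightarrow> mat" where
  "mT M = map (\<lambda>j. map (\<lambda>r. r ! j) M) [0..<length M]"

definition cp :: "nat \<Rightarrow> mat \<Rightarrow> mat" where
  "cp w M = (let R = filter (\<lambda>r. \<exists>x\<in>set r. x \<noteq> 0) M;
                 J = filter (\<lambda>j. \<exists>r\<in>set M. r ! j \<noteq> 0) [0..<w]
             in map (\<lambda>r. map (\<lambda>j. r ! j) J) R)"

definition cp_square :: "nat \<Rightarrow> mat \<Rightarrow> bool" where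
  "cp_square w M \<longleftrightarrow>
     length (filter (\<lambda>r. \<exists>x\<in>set r. x \<noteq> 0) M) =
     length (filter (\<lambda>j. \<exists>r\<in>set M. r ! j \<noteq> 0) [0..<w])"

text \<open>Column shuffles Sh_c(M1,M2): shuffle the columns of [M1 ; 0_{n2 x n1}] with
  the columns of [0_{n1 x n2} ; M2].\<close>
definition Sh_c :: "mat \<Rightarrow> mat \<Rightarrow> mat set" where
  "Sh_c M1 M2 = (let n1 = length M1; n2 = length M2 in
     mat_of_cols (n1 + n2) `
       shuffles (map (\<lambda>c. c @ replicate n2 0) (cols n1 M1))
                (map (\<lambda>c. replicate n1 0 @ c) (cols n2 M2)))"

definition Sh_r :: "mat \<Rightarrow> mat \<Rightarrow> mat set" where
  "Sh_r M1 M2 = (let n1 = length M1; n2 = length M2 in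
     shuffles (map (\<lambda>r. r @ replicate n2 0) M1)
              (map (\<lambda>r. replicate n1 0 @ r) M2))"

section \<open>The vector spaces: finitely supported coefficient functions on packed matrices\<close>

definition fsupp :: "('b \<Rightarrow> 'a::zero) \<Rightarrow> 'b set" where
  "fsupp x = {M. x M \<noteq> 0}"

text \<open>Elements of PM_k (and of PM_k^*, which has the same underlying basis set):
  x = sum_M x(M) F_M.\<close>
definition PMk :: "nat \<Rightarrow> (mat \<Rightarrow> 'a::field) set" where
  "PMk k = {x. finite (fsupp x) \<and> (\<forall>M\<in>fsupp x. packed k M)}"

text \<open>Elements of the tensor square, in the basis F_A (x) F_B.\<close>
definition PMk2 :: "nat \<Rightarrow> (mat \<times> mat \<Rightarrow> 'a::field) set" where
  "PMk2 k = {t. finite (fsupp t) \<and> (\<forall>(A,B)\<in>fsupp t. packed k A \<and> packed k B)}"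

definition basisF :: "mat \<Rightarrow> mat \<Rightarrow> 'a::field" where
  "basisF M = (\<lambda>N. if N = M then 1 else 0)"

definition mult_PM :: "(mat \<Rightarrow> 'a::field) \<Rightarrow> (mat \<Rightarrow> 'a) \<Rightarrow> mat \<Rightarrow> 'a" where
  "mult_PM x y = (\<lambda>M. \<Sum>M1\<in>fsupp x. \<Sum>M2\<in>fsupp y.
       x M1 * y M2 * (if M \<in> Sh_c M1 M2 then 1 else 0))"

definition unit_PM :: "mat \<Rightarrow> 'a::field" where
  "unit_PM = basisF []"

definition counit_PM :: "(mat \<Rightarrow> 'a::field) \<Rightarrow> 'a" where
  "counit_PM x = x []"

definition Delta_PM :: "(mat \<Rightarrow> 'a::field) \<Rightarrow> mat \<times> mat \<Rightarrow> 'a" where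
  "Delta_PM x = (\<lambda>(A, B). \<Sum>M\<in>fsupp x. x M *
       (\<Sum>j\<in>{0..length M}.
          (let L = map (take j) M; R = map (drop j) M in
           if cp_square j L \<and> cp_square (length M - j) R \<and>
              cp j L = A \<and> cp (length M - j) R = B then 1 else 0)))"

definition mult_PMd :: "(mat \<Rightarrow> 'a::field) \<Rightarrow> (mat \<Rightarrow> 'a) \<Rightarrow> mat \<Rightarrow> 'a" where
  "mult_PMd x y = (\<lambda>M. \<Sum>M1\<in>fsupp x. \<Sum>M2\<in>fsupp y.
       x M1 * y M2 * (if M \<in> Sh_r M1 M2 then 1 else 0))"

definition unit_PMd :: "mat \<Rightarrow> 'a::field" where
  "unit_PMd = basisF []"

definition counit_PMd :: "(mat \<Rightarrow> 'a::field) \<Rightarrow> 'a" where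
  "counit_PMd x = x []"

definition Delta_PMd :: "(mat \<Rightarrow> 'a::field) \<Rightarrow> mat \<times> mat \<Rightarrow> 'a" where
  "Delta_PMd x = (\<lambda>(A, B). \<Sum>M\<in>fsupp x. x M *
       (\<Sum>i\<in>{0..length M}.
          (let T = take i M; D = drop i M in
           if cp_square (length M) T \<and> cp_square (length M) D \<and>
              cp (length M) T = A \<and> cp (length M) D = B then 1 else 0)))"

definition phi :: "(mat \<Rightarrow> 'a::field) \<Rightarrow> mat \<Rightarrow> 'a" where
  "phi x = (\<lambda>N. \<Sum>M\<in>fsupp x. x M * (if N = mT M then 1 else 0))"

definition tensor_basis_map :: "(mat \<Rightarrow> mat) \<Rightarrow> (mat \<times> mat \<Rightarrow> 'a::field) \<Rightarrow> mat \<times> mat \<Rightarrow> 'a" where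
  "tensor_basis_map g t = (\<lambda>(A, B). \<Sum>(M1, M2)\<in>fsupp t.
       t (M1, M2) * (if A = g M1 \<and> B = g M2 then 1 else 0))"

text \<open>phi is an isomorphism of bialgebras (hence of Hopf algebras) PM_k -> PM_k^*:
  a linear bijection compatible with product, unit, coproduct and counit.\<close>
definition hopf_iso_phi :: "nat \<Rightarrow> 'a::field itself \<Rightarrow> bool" where
  "hopf_iso_phi k (_ :: 'a itself) \<longleftrightarrow>
     bij_betw (phi :: (mat \<Rightarrow> 'a) \<Rightarrow> _) (PMk k) (PMk k) \<and>
     (\<forall>x::mat \<Rightarrow> 'a\<in>PMk k. \<forall>y\<in>PMk k. \<forall>c::'a.
        phi (\<lambda>M. c * x M + y M) = (\<lambda>M. c * phi x M + phi y M)) \<and>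
     (\<forall>x::mat \<Rightarrow> 'a\<in>PMk k. \<forall>y\<in>PMk k. phi (mult_PM x y) = mult_PMd (phi x) (phi y)) \<and>
     phi (unit_PM :: mat \<Rightarrow> 'a) = unit_PMd \<and>
     (\<forall>x::mat \<Rightarrow> 'a\<in>PMk k. Delta_PMd (phi x) = tensor_basis_map mT (Delta_PM x)) \<and>
     (\<forall>x::mat \<Rightarrow> 'a\<in>PMk k. counit_PMd (phi x) = (counit_PM x :: 'a))"

end

theory Submission
  imports Defs
begin

definition sq :: "mat \<Rightarrow> bool" where
  "sq M \<longleftrightarrow> is_mat (length M) (length M) M"

lemma length_mT[simp]: "length (mT M) = length M"
  by (simp add: mT_def)

lemma sq_mT: "sq (mT M)"
  by (simp add: sq_def is_mat_def mT_def)

lemma mT_mT: assumes "sq M" shows "mT (mT M) = M"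
proof (rule nth_equalityI)
  show "length (mT (mT M)) = length M" by simp
  fix i assume i: "i < length (mT (mT M))"
  have "length (M ! i) = length M" using assms i unfolding sq_def is_mat_def by simp
  then show "mT (mT M) ! i = M ! i" using i
    by (auto simp: mT_def intro!: nth_equalityI)
qed

lemma mT_inj: "sq A \<Longrightarrow> sq B \<Longrightarrow> mT A = mT B \<Longrightarrow> A = B"
  by (metis mT_mT)

lemma packed_sq: "packed k M \<Longrightarrow> sq M"
  by (simp add: packed_def sq_def Let_def)

lemma mT_nth: "i < length M \<Longrightarrow> j < length M \<Longrightarrow> mT M ! j ! i = M ! i ! j"
  by (simp add: mT_def)

lemma packed_mT: assumes "packed k M" shows "packed k (mT M)"
proof -
  have s: "sq M" using assms by (rule packed_sq)
  have rl: "\<And>i. i < length M \<Longrightarrow> length (M ! i) = length M" using s by (simp add: sq_def is_mat_def)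
  have bd: "\<forall>r\<in>set M. \<forall>x\<in>set r. x \<le> k" using assms by (simp add: packed_def Let_def)
  have e: "\<And>i j. i < length M \<Longrightarrow> j < length M \<Longrightarrow> M ! i ! j \<le> k"
    using bd rl by (metis nth_mem)
  have "\<forall>r\<in>set (mT M). \<forall>x\<in>set r. x \<le> k"
    by (auto simp: mT_def in_set_conv_nth e)
  moreover have "\<forall>i<length M. \<exists>j<length M. mT M ! i ! j \<noteq> 0"
  proof (intro allI impI)
    fix i assume "i < length M"
    then obtain j where "j < length M" "M ! j ! i \<noteq> 0" using assms by (auto simp: packed_def Let_def)
    then show "\<exists>j<length M. mT M ! i ! j \<noteq> 0" using \<open>i < length M\<close> by (metis mT_nth)
  qed
  moreover have "\<forall>j<length M. \<exists>i<length M. mT M ! i ! j \<noteq> 0"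
  proof (intro allI impI)
    fix j assume "j < length M"
    then obtain i where "i < length M" "M ! j ! i \<noteq> 0" using assms by (auto simp: packed_def Let_def)
    then show "\<exists>i<length M. mT M ! i ! j \<noteq> 0" using \<open>j < length M\<close> by (metis mT_nth)
  qed
  ultimately show ?thesis using sq_mT[of M] by (simp add: packed_def Let_def sq_def)
qed

lemma phi_eval:
  assumes fin: "finite (fsupp f)" and sqs: "\<forall>M\<in>fsupp f. sq M"
  shows "phi f N = (if sq N then f (mT N) else 0)"
proof (cases "sq N")
  case True
  have "phi f N = (\<Sum>M\<in>fsupp f. if M = mT N then f M else 0)"
    unfolding phi_def
  proof (rule sum.cong[OF refl])
    fix M assume "M \<in> fsupp f"
    then have "sq M" using sqs by blast
    then have "(N = mT M) = (M = mT N)" using True mT_mT sq_mT by metis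
    then show "f M * (if N = mT M then 1 else 0) = (if M = mT N then f M else 0)" by simp
  qed
  also have "\<dots> = (if mT N \<in> fsupp f then f (mT N) else 0)"
    using fin by (simp add: sum.delta')
  also have "\<dots> = f (mT N)" by (auto simp: fsupp_def)
  finally show ?thesis using True by simp
next
  case False
  have "phi f N = 0" unfolding phi_def
    by (rule sum.neutral) (use False sq_mT in auto)
  then show ?thesis using False by simp
qed

lemma fsupp_PMk: "x \<in> PMk k \<Longrightarrow> finite (fsupp x) \<and> (\<forall>M\<in>fsupp x. sq M)"
  by (auto simp: PMk_def packed_sq)

lemma phi_PMk: "x \<in> PMk k \<Longrightarrow> phi x N = (if sq N then x (mT N) else 0)"
  using fsupp_PMk phi_eval by blast

lemma fsupp_phi: assumes "x \<in> PMk k" shows "fsupp (phi x) = mT ` fsupp x"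
proof -
  have "\<And>M. M \<in> fsupp x \<Longrightarrow> sq M" using assms fsupp_PMk by blast
  then show ?thesis using assms
    by (auto simp: fsupp_def phi_PMk[OF assms] image_iff sq_mT mT_mT intro!: exI[of _ "mT _"])
qed

lemma phi_in: assumes "x \<in> PMk k" shows "phi x \<in> PMk k"
  using assms fsupp_phi[OF assms] by (auto simp: PMk_def packed_mT)

lemma phi_phi: assumes "x \<in> PMk k" shows "phi (phi x) = x"
proof
  fix N
  have "x N \<noteq> 0 \<Longrightarrow> sq N" using assms by (auto simp: PMk_def fsupp_def packed_sq)
  then show "phi (phi x) N = x N"
    using phi_PMk[OF phi_in[OF assms]] phi_PMk[OF assms] by (auto simp: sq_mT mT_mT)
qed

lemma phi_bij: "bij_betw phi (PMk k) (PMk k)"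
  by (rule bij_betw_byWitness[where f'=phi]) (auto simp: phi_phi phi_in)

lemma phi_lin:
  assumes x: "x \<in> PMk k" and y: "y \<in> PMk k"
  shows "phi (\<lambda>M. c * x M + y M) = (\<lambda>M. c * phi x M + phi y M)"
proof -
  have sub: "fsupp (\<lambda>M. c * x M + y M) \<subseteq> fsupp x \<union> fsupp y" by (auto simp: fsupp_def)
  have "finite (fsupp (\<lambda>M. c * x M + y M))"
    using fsupp_PMk[OF x] fsupp_PMk[OF y] finite_subset[OF sub] by blast
  moreover have "\<forall>M\<in>fsupp (\<lambda>M. c * x M + y M). sq M" using sub fsupp_PMk[OF x] fsupp_PMk[OF y] by blast
  ultimately show ?thesis
    by (auto simp: phi_eval phi_PMk[OF x] phi_PMk[OF y])
qed

lemma phi_unit: "phi (unit_PM :: mat \<Rightarrow> 'a::field) = unit_PMd"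
proof -
  have "fsupp (unit_PM :: mat \<Rightarrow> 'a) = {[]}" by (auto simp: fsupp_def unit_PM_def basisF_def)
  then have "phi (unit_PM :: mat \<Rightarrow> 'a) N = (if sq N then unit_PM (mT N) else 0)" for N
    by (intro phi_eval) (auto simp: sq_def is_mat_def)
  then show ?thesis
    by (auto simp: unit_PM_def unit_PMd_def basisF_def sq_def is_mat_def mT_def)
qed

lemma phi_counit: "x \<in> PMk k \<Longrightarrow> counit_PMd (phi x) = counit_PM x"
  by (simp add: counit_PMd_def counit_PM_def phi_PMk sq_def is_mat_def mT_def)

lemma mT_eq_cols: "mT M = cols (length M) M" by (simp add: mT_def cols_def)
lemma moc_mT: "mat_of_cols (length zs) zs = mT zs" by (simp add: mat_of_cols_def mT_def)

lemma Sh_c_alt: "Sh_c M1 M2 = mat_of_cols (length M1 + length M2) ` Sh_r (mT M1) (mT M2)"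
  by (simp add: Sh_c_def Sh_r_def Let_def mT_eq_cols cols_def)

lemma Sh_r_sq:
  assumes "N \<in> Sh_r (mT M1) (mT M2)"
  shows "sq N \<and> length N = length M1 + length M2"
proof -
  have len: "length N = length M1 + length M2"
    using length_shuffles[OF assms[unfolded Sh_r_def Let_def]] by simp
  have "set N = set (map (\<lambda>r. r @ replicate (length M2) 0) (mT M1)) \<union>
                set (map (\<lambda>r. replicate (length M1) 0 @ r) (mT M2))"
    using set_shuffles[OF assms[unfolded Sh_r_def Let_def]] by simp
  then have "\<forall>r\<in>set N. length r = length M1 + length M2"
    by (auto simp: mT_def)
  then show ?thesis using len by (simp add: sq_def is_mat_def)
qed

lemma Sh_key:
  assumes "sq M1" "sq M2"
  shows "(N \<in> Sh_r (mT M1) (mT M2)) = (sq N \<and> mT N \<in> Sh_c M1 M2)"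
proof
  assume N: "N \<in> Sh_r (mT M1) (mT M2)"
  then have "sq N" "length N = length M1 + length M2" using Sh_r_sq by blast+
  then show "sq N \<and> mT N \<in> Sh_c M1 M2" using N
    by (metis Sh_c_alt image_eqI moc_mT)
next
  assume "sq N \<and> mT N \<in> Sh_c M1 M2"
  then obtain zs where z: "zs \<in> Sh_r (mT M1) (mT M2)" "mT N = mat_of_cols (length M1 + length M2) zs"
    and s: "sq N" by (auto simp: Sh_c_alt)
  then have "sq zs" "length zs = length M1 + length M2" using Sh_r_sq by blast+
  then have "mT N = mT zs" using z by (metis moc_mT)
  then have "N = zs" using s \<open>sq zs\<close> mT_inj by blast
  then show "N \<in> Sh_r (mT M1) (mT M2)" using z by simp
qed

lemma Sh_c_sq: "sq M1 \<Longrightarrow> sq M2 \<Longrightarrow> M \<in> Sh_c M1 M2 \<Longrightarrow> sq M"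
proof -
  assume "M \<in> Sh_c M1 M2"
  then obtain zs where "zs \<in> Sh_r (mT M1) (mT M2)" "M = mat_of_cols (length M1 + length M2) zs"
    by (auto simp: Sh_c_alt)
  then show "sq M" using Sh_r_sq by (metis moc_mT sq_mT)
qed

lemma inj_mT: "\<forall>M\<in>A. sq M \<Longrightarrow> inj_on mT A"
  by (auto intro!: inj_onI mT_inj)

lemma sum_ne0: "sum f A \<noteq> 0 \<Longrightarrow> \<exists>a\<in>A. f a \<noteq> 0"
  by (metis sum.neutral)

lemma reidx: "\<forall>M\<in>A. sq M \<Longrightarrow> sum g (mT ` A) = (\<Sum>M\<in>A. g (mT M))"
  by (simp add: sum.reindex inj_mT)

lemma phi_mT: "x \<in> PMk k \<Longrightarrow> sq M \<Longrightarrow> phi x (mT M) = x M"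
  by (simp add: phi_PMk sq_mT mT_mT)

lemma phi_mult:
  assumes x: "x \<in> PMk k" and y: "y \<in> PMk k"
  shows "phi (mult_PM x y) = mult_PMd (phi x) (phi y)"
proof
  fix N
  have fx: "finite (fsupp x)" "\<forall>M\<in>fsupp x. sq M" using fsupp_PMk[OF x] by auto
  have fy: "finite (fsupp y)" "\<forall>M\<in>fsupp y. sq M" using fsupp_PMk[OF y] by auto
  define S where "S = (\<Union>M1\<in>fsupp x. \<Union>M2\<in>fsupp y. Sh_c M1 M2)"
  have finS: "finite S" unfolding S_def using fx fy
    by (auto simp: Sh_c_alt Sh_r_def Let_def)
  have sub: "fsupp (mult_PM x y) \<subseteq> S"
  proof
    fix M assume "M \<in> fsupp (mult_PM x y)"
    then have "mult_PM x y M \<noteq> 0" by (simp add: fsupp_def)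
    then obtain M1 where "M1 \<in> fsupp x" and "(\<Sum>M2\<in>fsupp y. x M1 * y M2 * (if M \<in> Sh_c M1 M2 then 1 else 0)) \<noteq> 0"
      unfolding mult_PM_def using sum_ne0 by blast
    then obtain M2 where "M2 \<in> fsupp y" "x M1 * y M2 * (if M \<in> Sh_c M1 M2 then 1 else 0) \<noteq> 0"
      using sum_ne0 by blast
    then show "M \<in> S" unfolding S_def using \<open>M1 \<in> fsupp x\<close> by (auto split: if_splits)
  qed
  have sqS: "\<forall>M\<in>S. sq M" unfolding S_def using fx fy Sh_c_sq by blast
  have L: "phi (mult_PM x y) N = (if sq N then mult_PM x y (mT N) else 0)"
    using phi_eval finite_subset[OF sub finS] sub sqS by blast
  have "mult_PMd (phi x) (phi y) N =
     (\<Sum>M1\<in>fsupp x. \<Sum>M2\<in>fsupp y. phi x (mT M1) * phi y (mT M2) * (if N \<in> Sh_r (mT M1) (mT M2) then 1 else 0))"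
    unfolding mult_PMd_def fsupp_phi[OF x] fsupp_phi[OF y] reidx[OF fx(2)] reidx[OF fy(2)] ..
  also have "\<dots> = (\<Sum>M1\<in>fsupp x. \<Sum>M2\<in>fsupp y. x M1 * y M2 * (if sq N \<and> mT N \<in> Sh_c M1 M2 then 1 else 0))"
    using fx fy by (intro sum.cong refl) (simp add: phi_mT[OF x] phi_mT[OF y] Sh_key)
  finally have R: "mult_PMd (phi x) (phi y) N = \<dots>" .
  show "phi (mult_PM x y) N = mult_PMd (phi x) (phi y) N"
    unfolding L R by (cases "sq N") (simp_all add: mult_PM_def)
qed

definition Ix :: "nat \<Rightarrow> mat \<Rightarrow> nat list" where
  "Ix w X = filter (\<lambda>i. \<exists>j<w. X ! i ! j \<noteq> 0) [0..<length X]"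
definition Jx :: "nat \<Rightarrow> mat \<Rightarrow> nat list" where
  "Jx w X = filter (\<lambda>j. \<exists>i<length X. X ! i ! j \<noteq> 0) [0..<w]"

lemma rows_filter:
  assumes "is_mat h w X"
  shows "filter (\<lambda>r. \<exists>x\<in>set r. x \<noteq> 0) X = map (nth X) (Ix w X)"
proof -
  have "filter (\<lambda>r. \<exists>x\<in>set r. x \<noteq> 0) X = filter (\<lambda>r. \<exists>x\<in>set r. x \<noteq> 0) (map (nth X) [0..<length X])"
    by (simp add: map_nth)
  also have "\<dots> = map (nth X) (filter ((\<lambda>r. \<exists>x\<in>set r. x \<noteq> 0) \<circ> nth X) [0..<length X])"
    by (rule filter_map)
  also have "filter ((\<lambda>r. \<exists>x\<in>set r. x \<noteq> 0) \<circ> nth X) [0..<length X] = Ix w X"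
    unfolding Ix_def
  proof (rule filter_cong[OF refl])
    fix i assume "i \<in> set [0..<length X]"
    then have "length (X ! i) = w" using assms by (auto simp: is_mat_def)
    then show "((\<lambda>r. \<exists>x\<in>set r. x \<noteq> 0) \<circ> nth X) i = (\<exists>j<w. X ! i ! j \<noteq> 0)"
      by (force simp: in_set_conv_nth)
  qed
  finally show ?thesis .
qed

lemma cols_filter:
  "filter (\<lambda>j. \<exists>r\<in>set X. r ! j \<noteq> 0) [0..<w] = Jx w X"
  unfolding Jx_def by (rule filter_cong[OF refl]) (force simp: in_set_conv_nth)

lemma cp_alt: "is_mat h w X \<Longrightarrow> cp w X = map (\<lambda>i. map (\<lambda>j. X ! i ! j) (Jx w X)) (Ix w X)"
  unfolding cp_def Let_def by (subst rows_filter, assumption, subst cols_filter) (simp add: o_def)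

lemma cpsq_alt: "is_mat h w X \<Longrightarrow> cp_square w X \<longleftrightarrow> length (Ix w X) = length (Jx w X)"
  unfolding cp_square_def by (subst rows_filter, assumption, subst cols_filter) simp

lemma cp_sq: "cp_square w X \<Longrightarrow> sq (cp w X)"
  by (simp add: cp_square_def cp_def Let_def sq_def is_mat_def)

lemma length_cols[simp]: "length (cols w X) = w" by (simp add: cols_def)
lemma cols_nth: "j < w \<Longrightarrow> i < length X \<Longrightarrow> cols w X ! j ! i = X ! i ! j"
  by (simp add: cols_def)

lemma is_mat_cols: "is_mat w (length X) (cols w X)"
  by (auto simp: is_mat_def cols_def)

lemma Ix_cols: "Ix (length X) (cols w X) = Jx w X"
  unfolding Ix_def Jx_def by (rule filter_cong) (auto simp: cols_nth)

lemma Jx_cols: "is_mat h w X \<Longrightarrow> Jx (length X) (cols w X) = Ix w X"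
  unfolding Ix_def Jx_def by (rule filter_cong) (auto simp: cols_nth is_mat_def)

lemma cpsq_cols: "is_mat h w X \<Longrightarrow> cp_square (length X) (cols w X) \<longleftrightarrow> cp_square w X"
  using cpsq_alt[OF is_mat_cols[of w X]] cpsq_alt[of h w X] Ix_cols Jx_cols by metis

lemma cp_cols:
  assumes X: "is_mat h w X" and s: "cp_square w X"
  shows "cp (length X) (cols w X) = mT (cp w X)"
proof -
  have eqlen: "length (Ix w X) = length (Jx w X)" using cpsq_alt[OF X] s by simp
  have Jb: "\<forall>j\<in>set (Jx w X). j < w" by (simp add: Jx_def)
  have Ib: "\<forall>i\<in>set (Ix w X). i < length X" by (simp add: Ix_def)
  have "cp (length X) (cols w X) = map (\<lambda>j. map (\<lambda>i. X ! i ! j) (Ix w X)) (Jx w X)"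
    unfolding cp_alt[OF is_mat_cols] Ix_cols Jx_cols[OF X]
    using Jb Ib by (auto simp: cols_nth intro!: map_cong)
  also have "\<dots> = mT (cp w X)"
    unfolding cp_alt[OF X] using eqlen
    by (auto simp: mT_def intro!: nth_equalityI)
  finally show ?thesis .
qed

lemma take_mT: "j \<le> length M \<Longrightarrow> take j (mT M) = cols j (map (take j) M)"
  by (auto simp: mT_def cols_def take_map intro!: nth_equalityI)

lemma drop_mT: assumes "sq M" "j \<le> length M"
  shows "drop j (mT M) = cols (length M - j) (map (drop j) M)"
proof (rule nth_equalityI)
  show "length (drop j (mT M)) = length (cols (length M - j) (map (drop j) M))" by simp
  fix c assume c: "c < length (drop j (mT M))"
  have rl: "\<forall>r\<in>set M. length r = length M" using assms(1) by (simp add: sq_def is_mat_def)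
  show "drop j (mT M) ! c = cols (length M - j) (map (drop j) M) ! c"
    using c assms(2) rl by (auto simp: mT_def cols_def intro!: map_cong)
qed

lemma is_mat_take: "sq M \<Longrightarrow> j \<le> length M \<Longrightarrow> is_mat (length M) j (map (take j) M)"
  by (auto simp: sq_def is_mat_def)

lemma is_mat_drop: "sq M \<Longrightarrow> is_mat (length M) (length M - j) (map (drop j) M)"
  by (auto simp: sq_def is_mat_def)

lemma mT_eq_iff: "sq C \<Longrightarrow> (mT C = A) \<longleftrightarrow> (sq A \<and> C = mT A)"
  by (metis mT_mT sq_mT)

lemma term_eq:
  assumes M: "sq M" and j: "j \<le> length M"
  shows "(let T = take j (mT M); D = drop j (mT M) in
           if cp_square (length (mT M)) T \<and> cp_square (length (mT M)) D \<and>
              cp (length (mT M)) T = A \<and> cp (length (mT M)) D = B then (1::'a::field) else 0)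
    = (if sq A \<and> sq B then (let L = map (take j) M; R = map (drop j) M in
           if cp_square j L \<and> cp_square (length M - j) R \<and>
              cp j L = mT A \<and> cp (length M - j) R = mT B then 1 else 0) else 0)"
proof -
  let ?L = "map (take j) M" and ?R = "map (drop j) M"
  have iL: "is_mat (length M) j ?L" using is_mat_take[OF M j] .
  have iR: "is_mat (length M) (length M - j) ?R" using is_mat_drop[OF M] .
  have T: "take j (mT M) = cols j ?L" using take_mT[OF j] .
  have D: "drop j (mT M) = cols (length M - j) ?R" using drop_mT[OF M j] .
  have lL: "length ?L = length M" and lR: "length ?R = length M" by simp_all
  have sT: "cp_square (length M) (cols j ?L) = cp_square j ?L"
    using cpsq_cols[OF iL] lL by simp
  have sD: "cp_square (length M) (cols (length M - j) ?R) = cp_square (length M - j) ?R"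
    using cpsq_cols[OF iR] lR by simp
  show ?thesis
  proof (cases "cp_square j ?L \<and> cp_square (length M - j) ?R")
    case True
    then have cT: "cp (length M) (cols j ?L) = mT (cp j ?L)"
      and cD: "cp (length M) (cols (length M - j) ?R) = mT (cp (length M - j) ?R)"
      using cp_cols[OF iL] cp_cols[OF iR] lL lR by auto
    have q1: "sq (cp j ?L)" "sq (cp (length M - j) ?R)" using True cp_sq by auto
    show ?thesis unfolding Let_def length_mT T D sT sD cT cD
      using True mT_eq_iff[OF q1(1)] mT_eq_iff[OF q1(2)] by auto
  next
    case False
    then show ?thesis unfolding Let_def length_mT T D sT sD by auto
  qed
qed

lemma tensor_eval:
  assumes fin: "finite (fsupp t)" and sqs: "\<forall>(A,B)\<in>fsupp t. sq A \<and> sq B"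
  shows "tensor_basis_map mT t (A, B) = (if sq A \<and> sq B then t (mT A, mT B) else 0)"
proof (cases "sq A \<and> sq B")
  case True
  have "tensor_basis_map mT t (A, B) = (\<Sum>p\<in>fsupp t. if p = (mT A, mT B) then t p else 0)"
    unfolding tensor_basis_map_def
  proof (simp only: prod.case, rule sum.cong[OF refl])
    fix p assume p: "p \<in> fsupp t"
    obtain M1 M2 where pe: "p = (M1, M2)" by (cases p)
    then have "sq M1" "sq M2" using sqs p by auto
    then have "(A = mT M1 \<and> B = mT M2) = (p = (mT A, mT B))" using True pe mT_eq_iff by auto
    then show "(case p of (M1, M2) \<Rightarrow> t (M1, M2) * (if A = mT M1 \<and> B = mT M2 then 1 else 0)) =
        (if p = (mT A, mT B) then t p else 0)" using pe by simp
  qed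
  also have "\<dots> = (if (mT A, mT B) \<in> fsupp t then t (mT A, mT B) else 0)"
    using fin by (simp add: sum.delta')
  also have "\<dots> = t (mT A, mT B)" by (auto simp: fsupp_def)
  finally show ?thesis using True by simp
next
  case False
  have "tensor_basis_map mT t (A, B) = 0" unfolding tensor_basis_map_def
  proof (simp only: prod.case, rule sum.neutral, rule ballI)
    fix p assume "p \<in> fsupp t"
    obtain M1 M2 where pe: "p = (M1, M2)" by (cases p)
    have "\<not> (A = mT M1 \<and> B = mT M2)" using False sq_mT by auto
    then show "(case p of (M1, M2) \<Rightarrow> t (M1, M2) * (if A = mT M1 \<and> B = mT M2 then 1 else 0)) = 0"
      using pe by auto
  qed
  then show ?thesis using False by auto
qed

lemma Delta_supp:
  assumes x: "x \<in> PMk k"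
  shows "finite (fsupp (Delta_PM x)) \<and> (\<forall>(A,B)\<in>fsupp (Delta_PM x). sq A \<and> sq B)"
proof -
  define g where "g = (\<lambda>(M::mat, j::nat). (cp j (map (take j) M), cp (length M - j) (map (drop j) M)))"
  define S where "S = g ` {(M, j). M \<in> fsupp x \<and> j \<in> {0..length M} \<and>
      cp_square j (map (take j) M) \<and> cp_square (length M - j) (map (drop j) M)}"
  have "finite (Sigma (fsupp x) (\<lambda>M. {0..length M}))" using fsupp_PMk[OF x] by auto
  then have finS: "finite S" unfolding S_def
    by (rule finite_imageI[OF finite_subset, rotated]) auto
  have sqS: "\<forall>(A,B)\<in>S. sq A \<and> sq B" unfolding S_def g_def by (auto intro: cp_sq)
  have sub: "fsupp (Delta_PM x) \<subseteq> S"
  proof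
    fix p assume "p \<in> fsupp (Delta_PM x)"
    obtain A B where pe: "p = (A, B)" by (cases p)
    have "Delta_PM x (A, B) \<noteq> 0" using \<open>p \<in> _\<close> pe by (simp add: fsupp_def)
    then obtain M where M: "M \<in> fsupp x" and "x M * (\<Sum>j\<in>{0..length M}.
          (let L = map (take j) M; R = map (drop j) M in
           if cp_square j L \<and> cp_square (length M - j) R \<and>
              cp j L = A \<and> cp (length M - j) R = B then 1 else 0)) \<noteq> 0"
      unfolding Delta_PM_def prod.case using sum_ne0 by blast
    then have "(\<Sum>j\<in>{0..length M}.
          (let L = map (take j) M; R = map (drop j) M in
           if cp_square j L \<and> cp_square (length M - j) R \<and>
              cp j L = A \<and> cp (length M - j) R = B then 1 else 0)) \<noteq> (0::'a)" by auto
    then obtain j where "j \<in> {0..length M}" and "(let L = map (take j) M; R = map (drop j) M in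
           if cp_square j L \<and> cp_square (length M - j) R \<and>
              cp j L = A \<and> cp (length M - j) R = B then 1 else (0::'a)) \<noteq> 0"
      using sum_ne0 by blast
    then show "p \<in> S" using M pe unfolding S_def g_def
      by (auto simp: Let_def split: if_splits intro!: image_eqI[where x="(M, j)"])
  qed
  show ?thesis using finite_subset[OF sub finS] sub sqS by blast
qed

lemma phi_Delta:
  assumes x: "x \<in> PMk k"
  shows "Delta_PMd (phi x) = tensor_basis_map mT (Delta_PM x)"
proof
  fix p :: "mat \<times> mat"
  obtain A B where pe: "p = (A, B)" by (cases p)
  have fx: "\<forall>M\<in>fsupp x. sq M" using fsupp_PMk[OF x] by auto
  have ds: "finite (fsupp (Delta_PM x))" "\<forall>(A,B)\<in>fsupp (Delta_PM x). sq A \<and> sq B"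
    using Delta_supp[OF x] by auto
  have "Delta_PMd (phi x) (A, B) = (\<Sum>M\<in>fsupp x. x M * (\<Sum>i\<in>{0..length M}.
       (if sq A \<and> sq B then (let L = map (take i) M; R = map (drop i) M in
           if cp_square i L \<and> cp_square (length M - i) R \<and>
              cp i L = mT A \<and> cp (length M - i) R = mT B then 1 else 0) else 0)))"
    unfolding Delta_PMd_def prod.case fsupp_phi[OF x] reidx[OF fx]
  proof (rule sum.cong[OF refl])
    fix M assume M: "M \<in> fsupp x"
    then have sM: "sq M" using fx by blast
    show "phi x (mT M) * (\<Sum>i = 0..length (mT M).
             let T = take i (mT M); D = drop i (mT M)
             in if cp_square (length (mT M)) T \<and> cp_square (length (mT M)) D \<and>
                   cp (length (mT M)) T = A \<and> cp (length (mT M)) D = B then 1 else 0) =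
          x M * (\<Sum>i = 0..length M. if sq A \<and> sq B then let L = map (take i) M; R = map (drop i) M
             in if cp_square i L \<and> cp_square (length M - i) R \<and>
                   cp i L = mT A \<and> cp (length M - i) R = mT B then 1 else 0 else 0)"
      unfolding phi_mT[OF x sM] length_mT
      apply (intro arg_cong[where f="\<lambda>s. x M * s"] sum.cong refl)
      apply (rule term_eq[OF sM, unfolded length_mT])
      apply simp
      done
  qed
  also have "\<dots> = tensor_basis_map mT (Delta_PM x) (A, B)"
    unfolding tensor_eval[OF ds] by (cases "sq A"; cases "sq B") (simp_all add: Delta_PM_def)
  finally show "Delta_PMd (phi x) p = tensor_basis_map mT (Delta_PM x) p" using pe by simp
qed

theorem proposition2p5:
  fixes k :: nat
  assumes "k \<ge> 1"
  shows "hopf_iso_phi k TYPE('a::field)"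
  unfolding hopf_iso_phi_def
  using phi_bij phi_lin phi_mult phi_unit phi_Delta phi_counit by blast

end
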